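(* Let $H_0$ be a lattice Hamiltonian satisfying the Lieb–Robinson bound described in the context, let $\gamma>0$ and let $G$ be an even integrable filter function. If $O$ is an operator supported on a set $A$, then for every $l$ there is an operator $W^l_{\gamma,G}(O)$ supported on $b_l(A)$ such that $$\Vert W_{\gamma,G}(O)-W^l_{\gamma,G}(O)\Vert\le\Bigl\{\int_{|u|\ge l\gamma/v_{LR}}|G(u)|\,du+g(l)|A|\int|G(u)|\,du\Bigr\}\Vert O\Vert.$$
   Context: Finite lattice with metric ${\rm dist}$, finite-dimensional site Hilbert spaces; $H_0=\sum_Z H_Z$ with $H_Z$ Hermitian supported on $Z$, ${\rm diam}(Z)\le R$, $\sup_i\sum_{Z\ni i}\Vert H_Z\Vert\le J$. $b_l(A)$ = sites within distance $l$ of $A$, $|A|$ = cardinality. Lieb–Robinson bound: there are $v_{LR}>0$ and a function $g$ (decaying faster than exponentially in $l/R$) such that for any $O$ supported on $A$, any $l$ and any $|t|\le l/v_{LR}$, $e^{iH_0t}Oe^{-iH_0t}$ can be approximated by an operator supported on $b_l(A)$ within operator-norm error $\frac{v_{LR}|t|}{l}g(l)|A|\Vert O\Vert$. The operator filtered below energy $\gamma$ is $W_{\gamma,G}(O)=\gamma\int dt\,G(\gamma t)e^{iH_0t}Oe^{-iH_0t}$, where the filter $G$ is an even, rapidly decaying function whose Fourier transform $\tilde G(\omega)=\int G(t)e^{i\omega t}dt$ is close to $0$ for $|\omega|\ge1$ and close to $1$ for $|\omega|\le 1/2$. *)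

theory Defs
  imports "HOL-Analysis.Analysis"
begin

text \<open>Sites form the finite type 'a (a finite metric space).
 Site i carries the Hilbert space C^(d i). Basis states of the full Hilbert space are
 configurations sigma with sigma i < d i. Operators are given by their matrix entries
 on configurations (entries outside the configuration set are irrelevant).\<close>

type_synonym 'a cfg = "'a \<Rightarrow> nat"
type_synonym 'a qop = "'a cfg \<Rightarrow> 'a cfg \<Rightarrow> complex"

definition conf :: "('a \<Rightarrow> nat) \<Rightarrow> 'a cfg set" where
  "conf d = {\<sigma>. \<forall>i. \<sigma> i < d i}"

definition op_mult :: "('a \<Rightarrow> nat) \<Rightarrow> 'a qop \<Rightarrow> 'a qop \<Rightarrow> 'a qop" where
  "op_mult d X Y = (\<lambda>\<sigma> \<tau>. \<Sum>\<rho>\<in>conf d. X \<sigma> \<rho> * Y \<rho> \<tau>)"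

definition op_id :: "'a qop" where
  "op_id = (\<lambda>\<sigma> \<tau>. if \<sigma> = \<tau> then 1 else 0)"

primrec op_pow :: "('a \<Rightarrow> nat) \<Rightarrow> 'a qop \<Rightarrow> nat \<Rightarrow> 'a qop" where
  "op_pow d X 0 = op_id"
| "op_pow d X (Suc k) = op_mult d X (op_pow d X k)"

definition op_exp :: "('a \<Rightarrow> nat) \<Rightarrow> 'a qop \<Rightarrow> 'a qop" where
  "op_exp d X = (\<lambda>\<sigma> \<tau>. \<Sum>k. op_pow d X k \<sigma> \<tau> / of_nat (fact k))"

definition op_diff :: "'a qop \<Rightarrow> 'a qop \<Rightarrow> 'a qop" where
  "op_diff X Y = (\<lambda>\<sigma> \<tau>. X \<sigma> \<tau> - Y \<sigma> \<tau>)"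

definition op_apply :: "('a \<Rightarrow> nat) \<Rightarrow> 'a qop \<Rightarrow> ('a cfg \<Rightarrow> complex) \<Rightarrow> ('a cfg \<Rightarrow> complex)" where
  "op_apply d X v = (\<lambda>\<sigma>. \<Sum>\<tau>\<in>conf d. X \<sigma> \<tau> * v \<tau>)"

definition vec_norm :: "('a \<Rightarrow> nat) \<Rightarrow> ('a cfg \<Rightarrow> complex) \<Rightarrow> real" where
  "vec_norm d v = sqrt (\<Sum>\<sigma>\<in>conf d. (cmod (v \<sigma>))^2)"

definition op_norm :: "('a \<Rightarrow> nat) \<Rightarrow> 'a qop \<Rightarrow> real" where
  "op_norm d X = Sup {vec_norm d (op_apply d X v) | v. vec_norm d v \<le> 1}"

definition hermitian :: "('a \<Rightarrow> nat) \<Rightarrow> 'a qop \<Rightarrow> bool" where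
  "hermitian d X = (\<forall>\<sigma>\<in>conf d. \<forall>\<tau>\<in>conf d. X \<sigma> \<tau> = cnj (X \<tau> \<sigma>))"

text \<open>X is supported on A: X = M_A tensor identity on the complement of A.\<close>
definition supported_on :: "('a \<Rightarrow> nat) \<Rightarrow> 'a set \<Rightarrow> 'a qop \<Rightarrow> bool" where
  "supported_on d A X = (\<exists>M :: 'a qop. \<forall>\<sigma>\<in>conf d. \<forall>\<tau>\<in>conf d.
      X \<sigma> \<tau> = (if (\<forall>i. i \<notin> A \<longrightarrow> \<sigma> i = \<tau> i)
                 then M (\<lambda>i. if i \<in> A then \<sigma> i else 0) (\<lambda>i. if i \<in> A then \<tau> i else 0)
                 else 0))"

definition heis :: "('a \<Rightarrow> nat) \<Rightarrow> 'a qop \<Rightarrow> real \<Rightarrow> 'a qop \<Rightarrow> 'a qop" where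
  "heis d H t X = op_mult d (op_mult d (op_exp d (\<lambda>\<sigma> \<tau>. \<i> * of_real t * H \<sigma> \<tau>)) X)
                              (op_exp d (\<lambda>\<sigma> \<tau>. - \<i> * of_real t * H \<sigma> \<tau>))"

definition bl :: "real \<Rightarrow> 'a::metric_space set \<Rightarrow> 'a set" where
  "bl l A = {x. \<exists>y\<in>A. dist x y \<le> l}"

definition filtered :: "('a \<Rightarrow> nat) \<Rightarrow> 'a qop \<Rightarrow> real \<Rightarrow> (real \<Rightarrow> real) \<Rightarrow> 'a qop \<Rightarrow> 'a qop" where
  "filtered d H \<gamma> G X = (\<lambda>\<sigma> \<tau>. of_real \<gamma> * (LINT t|lborel. of_real (G (\<gamma> * t)) * heis d H t X \<sigma> \<tau>))"

end

theory Submission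
  imports Defs
begin


lemma vec_norm_L2: "vec_norm d v = L2_set (\<lambda>\<sigma>. cmod (v \<sigma>)) (conf d)"
  unfolding vec_norm_def L2_set_def by simp

lemma conf_finite: fixes d :: "'a::finite \<Rightarrow> nat" shows "finite (conf d)"
proof -
  have "conf d = PiE UNIV (\<lambda>i. {..<d i})"
    unfolding conf_def PiE_UNIV_domain by (auto simp: Pi_def)
  then show ?thesis by (simp add: finite_PiE)
qed

definition rst :: "'a set \<Rightarrow> 'a cfg \<Rightarrow> 'a cfg" where
  "rst S \<sigma> = (\<lambda>i. if i \<in> S then \<sigma> i else 0)"

lemma rst_conf: "\<forall>i. d i \<ge> 1 \<Longrightarrow> \<sigma> \<in> conf d \<Longrightarrow> rst S \<sigma> \<in> conf d"
  unfolding conf_def rst_def by (auto simp: Suc_le_eq)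

lemma rst_rst[simp]: "rst S (rst S \<sigma>) = rst S \<sigma>"
  unfolding rst_def by auto

definition agree :: "'a set \<Rightarrow> 'a cfg \<Rightarrow> 'a cfg \<Rightarrow> bool" where
  "agree S \<sigma> \<tau> = (\<forall>i. i \<notin> S \<longrightarrow> \<sigma> i = \<tau> i)"

lemma supported_iff:
  assumes dims: "\<forall>i. d i \<ge> 1"
  shows "supported_on d S X \<longleftrightarrow> (\<forall>\<sigma>\<in>conf d. \<forall>\<tau>\<in>conf d.
     X \<sigma> \<tau> = (if agree S \<sigma> \<tau> then X (rst S \<sigma>) (rst S \<tau>) else 0))"
proof
  assume "supported_on d S X"
  then obtain M where M: "\<forall>\<sigma>\<in>conf d. \<forall>\<tau>\<in>conf d.
      X \<sigma> \<tau> = (if agree S \<sigma> \<tau> then M (rst S \<sigma>) (rst S \<tau>) else 0)"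
    unfolding supported_on_def agree_def rst_def by blast
  show "\<forall>\<sigma>\<in>conf d. \<forall>\<tau>\<in>conf d.
     X \<sigma> \<tau> = (if agree S \<sigma> \<tau> then X (rst S \<sigma>) (rst S \<tau>) else 0)"
  proof (intro ballI)
    fix \<sigma> \<tau> assume s: "\<sigma> \<in> conf d" and t: "\<tau> \<in> conf d"
    have a: "agree S (rst S \<sigma>) (rst S \<tau>)" unfolding agree_def rst_def by auto
    have "X (rst S \<sigma>) (rst S \<tau>) = M (rst S \<sigma>) (rst S \<tau>)"
      using M rst_conf[OF dims s] rst_conf[OF dims t] a by auto
    then show "X \<sigma> \<tau> = (if agree S \<sigma> \<tau> then X (rst S \<sigma>) (rst S \<tau>) else 0)"
      using M s t by auto
  qed
next
  assume "\<forall>\<sigma>\<in>conf d. \<forall>\<tau>\<in>conf d.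
     X \<sigma> \<tau> = (if agree S \<sigma> \<tau> then X (rst S \<sigma>) (rst S \<tau>) else 0)"
  then show "supported_on d S X"
    unfolding supported_on_def agree_def rst_def by blast
qed

lemma supported_cong:
  assumes dims: "\<forall>i. d i \<ge> 1"
    and h: "\<And>\<sigma> \<tau>. \<sigma> \<in> conf d \<Longrightarrow> \<tau> \<in> conf d \<Longrightarrow> agree S \<sigma> \<tau> \<Longrightarrow>
               W \<sigma> \<tau> = W (rst S \<sigma>) (rst S \<tau>)"
    and z: "\<And>\<sigma> \<tau>. \<sigma> \<in> conf d \<Longrightarrow> \<tau> \<in> conf d \<Longrightarrow> \<not> agree S \<sigma> \<tau> \<Longrightarrow> W \<sigma> \<tau> = 0"
  shows "supported_on d S W"
  using supported_iff[OF dims] h z by auto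

definition onset :: "('a \<Rightarrow> nat) \<Rightarrow> 'a qop \<Rightarrow> real set" where
  "onset d X = {vec_norm d (op_apply d X v) | v. vec_norm d v \<le> 1}"

lemma cmod_le_vec_norm:
  fixes d :: "'a::finite \<Rightarrow> nat"
  shows "\<tau> \<in> conf d \<Longrightarrow> cmod (v \<tau>) \<le> vec_norm d v"
  unfolding vec_norm_L2 by (rule member_le_L2_set[OF conf_finite])

lemma crude:
  fixes d :: "'a::finite \<Rightarrow> nat"
  shows "vec_norm d (op_apply d X v) \<le> (\<Sum>\<sigma>\<in>conf d. \<Sum>\<tau>\<in>conf d. cmod (X \<sigma> \<tau>)) * vec_norm d v"
proof -
  have "vec_norm d (op_apply d X v) \<le> (\<Sum>\<sigma>\<in>conf d. \<bar>cmod (op_apply d X v \<sigma>)\<bar>)"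
    unfolding vec_norm_L2 by (rule L2_set_le_sum_abs)
  also have "\<dots> \<le> (\<Sum>\<sigma>\<in>conf d. \<Sum>\<tau>\<in>conf d. cmod (X \<sigma> \<tau>) * vec_norm d v)"
  proof (rule sum_mono)
    fix \<sigma> assume "\<sigma> \<in> conf d"
    have "\<bar>cmod (op_apply d X v \<sigma>)\<bar> \<le> (\<Sum>\<tau>\<in>conf d. cmod (X \<sigma> \<tau> * v \<tau>))"
      unfolding op_apply_def by (simp add: norm_sum)
    also have "\<dots> \<le> (\<Sum>\<tau>\<in>conf d. cmod (X \<sigma> \<tau>) * vec_norm d v)"
      by (rule sum_mono) (simp add: norm_mult cmod_le_vec_norm mult_left_mono)
    finally show "\<bar>cmod (op_apply d X v \<sigma>)\<bar> \<le> (\<Sum>\<tau>\<in>conf d. cmod (X \<sigma> \<tau>) * vec_norm d v)" .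
  qed
  also have "\<dots> = (\<Sum>\<sigma>\<in>conf d. \<Sum>\<tau>\<in>conf d. cmod (X \<sigma> \<tau>)) * vec_norm d v"
    by (simp add: sum_distrib_right)
  finally show ?thesis .
qed

lemma onset_bdd:
  fixes d :: "'a::finite \<Rightarrow> nat"
  shows "bdd_above (onset d X)"
proof -
  have "\<forall>x\<in>onset d X. x \<le> (\<Sum>\<sigma>\<in>conf d. \<Sum>\<tau>\<in>conf d. cmod (X \<sigma> \<tau>))"
  proof
    fix x assume "x \<in> onset d X"
    then obtain v where x: "x = vec_norm d (op_apply d X v)" and v: "vec_norm d v \<le> 1"
      unfolding onset_def by auto
    have "x \<le> (\<Sum>\<sigma>\<in>conf d. \<Sum>\<tau>\<in>conf d. cmod (X \<sigma> \<tau>)) * vec_norm d v" using x crude by metis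
    also have "\<dots> \<le> (\<Sum>\<sigma>\<in>conf d. \<Sum>\<tau>\<in>conf d. cmod (X \<sigma> \<tau>))"
      using v by (simp add: mult_left_le sum_nonneg)
    finally show "x \<le> (\<Sum>\<sigma>\<in>conf d. \<Sum>\<tau>\<in>conf d. cmod (X \<sigma> \<tau>))" .
  qed
  then show ?thesis by (meson bdd_aboveI)
qed

lemma op_norm_onset: "op_norm d X = Sup (onset d X)"
  unfolding op_norm_def onset_def by simp

lemma op_norm_ge:
  fixes d :: "'a::finite \<Rightarrow> nat"
  shows "vec_norm d v \<le> 1 \<Longrightarrow> vec_norm d (op_apply d X v) \<le> op_norm d X"
  unfolding op_norm_onset by (rule cSup_upper[OF _ onset_bdd]) (auto simp: onset_def)

lemma op_norm_le:
  fixes d :: "'a::finite \<Rightarrow> nat"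
  shows "(\<And>v. vec_norm d v \<le> 1 \<Longrightarrow> vec_norm d (op_apply d X v) \<le> c) \<Longrightarrow> op_norm d X \<le> c"
  unfolding op_norm_onset
  by (rule cSup_least) (auto simp: onset_def vec_norm_def intro: exI[of _ "\<lambda>_. 0"])

lemma vec_norm_nonneg: "vec_norm d v \<ge> 0"
  unfolding vec_norm_def by (simp add: sum_nonneg)

lemma op_norm_nonneg:
  fixes d :: "'a::finite \<Rightarrow> nat"
  shows "op_norm d X \<ge> 0"
  using op_norm_ge[of d "\<lambda>_. 0" X] vec_norm_nonneg[of d "op_apply d X (\<lambda>_. 0)"]
  by (simp add: vec_norm_def) (meson order_trans real_sqrt_ge_zero)


lemma op_apply_scale: "op_apply d X (\<lambda>\<sigma>. c * v \<sigma>) = (\<lambda>\<sigma>. c * op_apply d X v \<sigma>)"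
  unfolding op_apply_def by (simp add: sum_distrib_left mult.left_commute)

lemma vec_norm_scale: "vec_norm d (\<lambda>\<sigma>. c * v \<sigma>) = cmod c * vec_norm d v"
  unfolding vec_norm_def
  by (simp add: norm_mult power_mult_distrib sum_distrib_left[symmetric] real_sqrt_mult)

lemma op_norm_apply:
  fixes d :: "'a::finite \<Rightarrow> nat"
  shows "vec_norm d (op_apply d X v) \<le> op_norm d X * vec_norm d v"
proof (cases "vec_norm d v = 0")
  case True
  then have "\<forall>\<tau>\<in>conf d. v \<tau> = 0"
    unfolding vec_norm_L2 using L2_set_eq_0_iff[OF conf_finite, of "\<lambda>\<sigma>. cmod (v \<sigma>)" d] by auto
  then have "op_apply d X v = (\<lambda>_. 0)" unfolding op_apply_def by auto
  then show ?thesis using True by (simp add: vec_norm_def)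
next
  case False
  let ?n = "vec_norm d v"
  have n: "?n > 0" using False vec_norm_nonneg[of d v] by auto
  let ?w = "\<lambda>\<sigma>. complex_of_real (1 / ?n) * v \<sigma>"
  have "vec_norm d ?w = cmod (complex_of_real (1/?n)) * ?n" by (rule vec_norm_scale)
  then have "vec_norm d ?w = 1" using n by (simp add: norm_divide)
  then have "vec_norm d (op_apply d X ?w) \<le> op_norm d X" by (intro op_norm_ge) simp
  then have "(1/?n) * vec_norm d (op_apply d X v) \<le> op_norm d X"
    using n op_apply_scale[of d X "complex_of_real (1/?n)" v] vec_norm_scale[of d "complex_of_real (1/?n)" "op_apply d X v"]
    by (simp add: norm_divide)
  then show ?thesis using n by (simp add: field_simps)
qed

lemma entry_le_op_norm:
  fixes d :: "'a::finite \<Rightarrow> nat"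
  assumes "\<sigma> \<in> conf d" "\<tau> \<in> conf d"
  shows "cmod (X \<sigma> \<tau>) \<le> op_norm d X"
proof -
  let ?e = "\<lambda>\<rho>. if \<rho> = \<tau> then (1::complex) else 0"
  have "(\<Sum>\<sigma>\<in>conf d. (cmod (?e \<sigma>))\<^sup>2) = (\<Sum>\<sigma>\<in>conf d. if \<sigma> = \<tau> then 1 else 0)"
    by (rule sum.cong) auto
  then have "vec_norm d ?e = 1" unfolding vec_norm_def using assms(2) conf_finite[of d]
    by simp
  then have "vec_norm d (op_apply d X ?e) \<le> op_norm d X" by (intro op_norm_ge) simp
  moreover have "op_apply d X ?e \<sigma> = X \<sigma> \<tau>"
    unfolding op_apply_def using assms(2) conf_finite[of d]
    by (simp add: if_distrib sum.delta cong: if_cong)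
  ultimately show ?thesis using cmod_le_vec_norm[OF assms(1), where v="op_apply d X ?e"] by simp
qed

lemma op_norm_crude:
  fixes d :: "'a::finite \<Rightarrow> nat"
  shows "op_norm d X \<le> (\<Sum>\<sigma>\<in>conf d. \<Sum>\<tau>\<in>conf d. cmod (X \<sigma> \<tau>))"
proof (rule op_norm_le)
  fix v assume "vec_norm d v \<le> 1"
  then show "vec_norm d (op_apply d X v) \<le> (\<Sum>\<sigma>\<in>conf d. \<Sum>\<tau>\<in>conf d. cmod (X \<sigma> \<tau>))"
    using crude[of d X v] by (smt (verit) mult_left_le sum_nonneg norm_ge_zero vec_norm_nonneg)
qed

lemma op_apply_diff: "op_apply d (op_diff X Y) v = (\<lambda>\<sigma>. op_apply d X v \<sigma> - op_apply d Y v \<sigma>)"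
  unfolding op_apply_def op_diff_def by (simp add: sum_subtractf algebra_simps)

lemma vec_norm_triangle:
  fixes d :: "'a::finite \<Rightarrow> nat"
  shows "vec_norm d (\<lambda>\<sigma>. a \<sigma> - b \<sigma>) \<le> vec_norm d a + vec_norm d b"
proof -
  have "vec_norm d (\<lambda>\<sigma>. a \<sigma> - b \<sigma>) \<le> L2_set (\<lambda>\<sigma>. cmod (a \<sigma>) + cmod (b \<sigma>)) (conf d)"
    unfolding vec_norm_L2 by (rule L2_set_mono) (auto simp: norm_triangle_ineq4)
  also have "\<dots> \<le> vec_norm d a + vec_norm d b"
    unfolding vec_norm_L2 by (rule L2_set_triangle_ineq)
  finally show ?thesis .
qed

lemma op_norm_triangle:
  fixes d :: "'a::finite \<Rightarrow> nat"
  shows "op_norm d (op_diff X Z) \<le> op_norm d (op_diff X Y) + op_norm d (op_diff Y Z)"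
proof (rule op_norm_le)
  fix v assume v: "vec_norm d v \<le> 1"
  have "op_apply d (op_diff X Z) v = (\<lambda>\<sigma>. op_apply d (op_diff X Y) v \<sigma> - (- op_apply d (op_diff Y Z) v \<sigma>))"
    by (simp add: op_apply_diff)
  then have "vec_norm d (op_apply d (op_diff X Z) v) \<le> vec_norm d (op_apply d (op_diff X Y) v) + vec_norm d (\<lambda>\<sigma>. - op_apply d (op_diff Y Z) v \<sigma>)"
    using vec_norm_triangle[of d "op_apply d (op_diff X Y) v" "\<lambda>\<sigma>. - op_apply d (op_diff Y Z) v \<sigma>"] by simp
  also have "vec_norm d (\<lambda>\<sigma>. - op_apply d (op_diff Y Z) v \<sigma>) = vec_norm d (op_apply d (op_diff Y Z) v)"
    by (simp add: vec_norm_def)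
  finally show "vec_norm d (op_apply d (op_diff X Z) v) \<le> op_norm d (op_diff X Y) + op_norm d (op_diff Y Z)"
    using op_norm_ge[OF v, where X="op_diff X Y"] op_norm_ge[OF v, where X="op_diff Y Z"] by linarith
qed



lemma op_mult_assoc:
  fixes d :: "'a::finite \<Rightarrow> nat"
  shows "op_mult d (op_mult d X Y) Z = op_mult d X (op_mult d Y Z)"
  unfolding op_mult_def
  by (intro ext) (simp add: sum_distrib_left sum_distrib_right mult.assoc, rule sum.swap)

lemma op_mult_id_left:
  fixes d :: "'a::finite \<Rightarrow> nat"
  shows "\<sigma> \<in> conf d \<Longrightarrow> op_mult d op_id X \<sigma> \<tau> = X \<sigma> \<tau>"
proof -
  assume s: "\<sigma> \<in> conf d"
  have "op_mult d op_id X \<sigma> \<tau> = (\<Sum>\<rho>\<in>conf d. if \<sigma> = \<rho> then X \<rho> \<tau> else 0)"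
    unfolding op_mult_def op_id_def by (rule sum.cong) auto
  then show ?thesis using s conf_finite[of d] by simp
qed

lemma op_mult_id_right:
  fixes d :: "'a::finite \<Rightarrow> nat"
  shows "\<tau> \<in> conf d \<Longrightarrow> op_mult d X op_id \<sigma> \<tau> = X \<sigma> \<tau>"
proof -
  assume s: "\<tau> \<in> conf d"
  have "op_mult d X op_id \<sigma> \<tau> = (\<Sum>\<rho>\<in>conf d. if \<rho> = \<tau> then X \<sigma> \<rho> else 0)"
    unfolding op_mult_def op_id_def by (rule sum.cong) auto
  then show ?thesis using s conf_finite[of d] by simp
qed

lemma op_mult_cong_right:
  assumes "\<And>\<rho>. \<rho> \<in> conf d \<Longrightarrow> Y \<rho> \<tau> = Y' \<rho> \<tau>"
  shows "op_mult d X Y \<sigma> \<tau> = op_mult d X Y' \<sigma> \<tau>"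
  unfolding op_mult_def using assms by (intro sum.cong) auto

lemma op_pow_add:
  fixes d :: "'a::finite \<Rightarrow> nat"
  shows "\<sigma> \<in> conf d \<Longrightarrow> op_mult d (op_pow d X i) (op_pow d X j) \<sigma> \<tau> = op_pow d X (i+j) \<sigma> \<tau>"
proof (induction i arbitrary: \<sigma>)
  case 0
  then show ?case by (simp add: op_mult_id_left)
next
  case (Suc i)
  have "op_mult d (op_pow d X (Suc i)) (op_pow d X j) \<sigma> \<tau>
        = op_mult d X (op_mult d (op_pow d X i) (op_pow d X j)) \<sigma> \<tau>"
    by (simp add: op_mult_assoc)
  also have "\<dots> = op_mult d X (op_pow d X (i+j)) \<sigma> \<tau>"
    by (rule op_mult_cong_right) (rule Suc.IH)
  finally show ?case by simp
qed

lemma op_pow_scale: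
  "op_pow d (\<lambda>\<sigma> \<tau>. z * X \<sigma> \<tau>) k = (\<lambda>\<sigma> \<tau>. z^k * op_pow d X k \<sigma> \<tau>)"
proof (induction k)
  case 0
  then show ?case by simp
next
  case (Suc k)
  then show ?case
    by (intro ext) (simp add: op_mult_def sum_distrib_left mult_ac)
qed

definition osum :: "('a \<Rightarrow> nat) \<Rightarrow> 'a qop \<Rightarrow> real" where
  "osum d X = (\<Sum>\<sigma>\<in>conf d. \<Sum>\<tau>\<in>conf d. cmod (X \<sigma> \<tau>))"

lemma osum_nonneg: "osum d X \<ge> 0"
  unfolding osum_def by (simp add: sum_nonneg)

lemma row_le_osum:
  fixes d :: "'a::finite \<Rightarrow> nat"
  shows "\<sigma> \<in> conf d \<Longrightarrow> (\<Sum>\<rho>\<in>conf d. cmod (X \<sigma> \<rho>)) \<le> osum d X"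
  unfolding osum_def
  by (rule member_le_sum[where f="\<lambda>\<sigma>. \<Sum>\<rho>\<in>conf d. cmod (X \<sigma> \<rho>)"]) (auto simp: sum_nonneg conf_finite)

lemma op_pow_bound:
  fixes d :: "'a::finite \<Rightarrow> nat"
  shows "\<sigma> \<in> conf d \<Longrightarrow> cmod (op_pow d X k \<sigma> \<tau>) \<le> osum d X ^ k"
proof (induction k arbitrary: \<sigma>)
  case 0
  then show ?case by (simp add: op_id_def)
next
  case (Suc k)
  have "cmod (op_pow d X (Suc k) \<sigma> \<tau>) \<le> (\<Sum>\<rho>\<in>conf d. cmod (X \<sigma> \<rho>) * cmod (op_pow d X k \<rho> \<tau>))"
    by (simp add: op_mult_def norm_sum norm_mult order_trans[OF norm_sum])
  also have "\<dots> \<le> (\<Sum>\<rho>\<in>conf d. cmod (X \<sigma> \<rho>) * osum d X ^ k)"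
    by (rule sum_mono) (simp add: Suc.IH mult_left_mono)
  also have "\<dots> \<le> osum d X * osum d X ^ k"
    by (simp add: sum_distrib_right[symmetric] mult_right_mono row_le_osum[OF Suc.prems] osum_nonneg)
  finally show ?case by simp
qed

definition expser :: "('a \<Rightarrow> nat) \<Rightarrow> 'a qop \<Rightarrow> complex \<Rightarrow> 'a qop" where
  "expser d X z = (\<lambda>\<sigma> \<tau>. \<Sum>k. (op_pow d X k \<sigma> \<tau> / of_nat (fact k)) * z^k)"

lemma op_exp_expser: "op_exp d (\<lambda>\<sigma> \<tau>. z * X \<sigma> \<tau>) = expser d X z"
  unfolding op_exp_def expser_def op_pow_scale by (intro ext) (simp add: mult_ac)

lemma expser_summable_norm:
  fixes d :: "'a::finite \<Rightarrow> nat"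
  assumes "\<sigma> \<in> conf d"
  shows "summable (\<lambda>k. norm (op_pow d X k \<sigma> \<tau> / of_nat (fact k) * z^k))"
proof (rule summable_comparison_test[OF _ summable_exp[of "osum d X * cmod z"]])
  show "\<exists>N. \<forall>n\<ge>N. norm (norm (op_pow d X n \<sigma> \<tau> / of_nat (fact n) * z^n)) \<le> inverse (fact n) * (osum d X * cmod z)^n"
  proof (intro exI allI impI)
    fix n :: nat
    have "norm (norm (op_pow d X n \<sigma> \<tau> / of_nat (fact n) * z^n)) = cmod (op_pow d X n \<sigma> \<tau>) * cmod z ^ n / fact n"
      by (simp add: norm_mult norm_divide norm_power)
    also have "\<dots> \<le> osum d X ^ n * cmod z ^ n / fact n"
      by (intro divide_right_mono mult_right_mono op_pow_bound[OF assms]) auto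
    also have "\<dots> = inverse (fact n) * (osum d X * cmod z)^n"
      by (simp add: power_mult_distrib field_simps)
    finally show "norm (norm (op_pow d X n \<sigma> \<tau> / of_nat (fact n) * z^n)) \<le> inverse (fact n) * (osum d X * cmod z)^n" .
  qed
qed

lemma expser_summable:
  fixes d :: "'a::finite \<Rightarrow> nat"
  assumes "\<sigma> \<in> conf d"
  shows "summable (\<lambda>k. op_pow d X k \<sigma> \<tau> / of_nat (fact k) * z^k)"
  by (rule summable_norm_cancel[OF expser_summable_norm[OF assms]])

lemma expser_zero:
  fixes d :: "'a::finite \<Rightarrow> nat"
  shows "expser d X 0 \<sigma> \<tau> = op_id \<sigma> \<tau>"
  unfolding expser_def using powser_zero[of "\<lambda>k. op_pow d X k \<sigma> \<tau> / of_nat (fact k)"] by simp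

lemma expser_mult:
  fixes d :: "'a::finite \<Rightarrow> nat"
  assumes s: "\<sigma> \<in> conf d" and t: "\<tau> \<in> conf d"
  shows "op_mult d (expser d X z) (expser d X w) \<sigma> \<tau> = expser d X (z + w) \<sigma> \<tau>"
proof -
  define a where "a = (\<lambda>\<rho> k. op_pow d X k \<sigma> \<rho> / of_nat (fact k) * z^k)"
  define b where "b = (\<lambda>\<rho> k. op_pow d X k \<rho> \<tau> / of_nat (fact k) * w^k)"
  have "op_mult d (expser d X z) (expser d X w) \<sigma> \<tau> = (\<Sum>\<rho>\<in>conf d. (\<Sum>k. a \<rho> k) * (\<Sum>k. b \<rho> k))"
    unfolding op_mult_def expser_def a_def b_def by simp
  also have "\<dots> = (\<Sum>\<rho>\<in>conf d. \<Sum>n. \<Sum>i\<le>n. a \<rho> i * b \<rho> (n - i))"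
  proof (rule sum.cong[OF refl])
    fix \<rho> assume r: "\<rho> \<in> conf d"
    show "(\<Sum>k. a \<rho> k) * (\<Sum>k. b \<rho> k) = (\<Sum>n. \<Sum>i\<le>n. a \<rho> i * b \<rho> (n - i))"
      by (rule Cauchy_product) (use expser_summable_norm[OF s] expser_summable_norm[OF r] in \<open>simp_all add: a_def b_def\<close>)
  qed
  also have "\<dots> = (\<Sum>n. \<Sum>\<rho>\<in>conf d. \<Sum>i\<le>n. a \<rho> i * b \<rho> (n - i))"
  proof (rule suminf_sum[symmetric])
    fix \<rho> assume r: "\<rho> \<in> conf d"
    show "summable (\<lambda>n. \<Sum>i\<le>n. a \<rho> i * b \<rho> (n - i))"
      by (rule summable_Cauchy_product) (use expser_summable_norm[OF s] expser_summable_norm[OF r] in \<open>simp_all add: a_def b_def\<close>)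
  qed
  also have "\<dots> = (\<Sum>n. op_pow d X n \<sigma> \<tau> / of_nat (fact n) * (z + w)^n)"
  proof (rule suminf_cong)
    fix n
    have "(\<Sum>\<rho>\<in>conf d. \<Sum>i\<le>n. a \<rho> i * b \<rho> (n - i))
        = (\<Sum>i\<le>n. (z^i * w^(n-i) / (of_nat (fact i) * of_nat (fact (n-i)))) *
              (\<Sum>\<rho>\<in>conf d. op_pow d X i \<sigma> \<rho> * op_pow d X (n-i) \<rho> \<tau>))"
      unfolding a_def b_def
      by (subst sum.swap) (simp add: sum_distrib_left field_simps)
    also have "\<dots> = (\<Sum>i\<le>n. (z^i * w^(n-i) / (of_nat (fact i) * of_nat (fact (n-i)))) * op_pow d X n \<sigma> \<tau>)"
    proof (rule sum.cong[OF refl])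
      fix i assume "i \<in> {..n}"
      then have "i + (n - i) = n" by simp
      then show "(z^i * w^(n-i) / (of_nat (fact i) * of_nat (fact (n-i)))) *
              (\<Sum>\<rho>\<in>conf d. op_pow d X i \<sigma> \<rho> * op_pow d X (n-i) \<rho> \<tau>)
          = (z^i * w^(n-i) / (of_nat (fact i) * of_nat (fact (n-i)))) * op_pow d X n \<sigma> \<tau>"
        using op_pow_add[OF s, of X i "n - i" \<tau>] by (simp add: op_mult_def)
    qed
    also have "\<dots> = (\<Sum>i\<le>n. (z^i * w^(n-i) / (of_nat (fact i) * of_nat (fact (n-i))))) * op_pow d X n \<sigma> \<tau>"
      by (rule sum_distrib_right[symmetric])
    also have "(\<Sum>i\<le>n. (z^i * w^(n-i) / (of_nat (fact i) * of_nat (fact (n-i))))) = (z + w)^n / of_nat (fact n)"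
    proof -
      have "(\<Sum>i\<le>n. (z^i * w^(n-i) / (of_nat (fact i) * of_nat (fact (n-i)))))
        = (\<Sum>i\<le>n. of_nat (n choose i) * z^i * w^(n-i) / of_nat (fact n))"
      proof (rule sum.cong[OF refl])
        fix i assume "i \<in> {..n}"
        then have "i \<le> n" by simp
        then show "z^i * w^(n-i) / (of_nat (fact i) * of_nat (fact (n-i))) = of_nat (n choose i) * z^i * w^(n-i) / of_nat (fact n)"
          by (simp add: binomial_fact)
      qed
      also have "\<dots> = (\<Sum>i\<le>n. of_nat (n choose i) * z^i * w^(n-i)) / of_nat (fact n)"
        by (rule sum_divide_distrib[symmetric])
      also have "\<dots> = (z + w)^n / of_nat (fact n)"
        by (simp only: binomial_ring)
      finally show ?thesis .
    qed
    also have "(z + w)^n / of_nat (fact n) * op_pow d X n \<sigma> \<tau> = op_pow d X n \<sigma> \<tau> / of_nat (fact n) * (z + w)^n"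
      by simp
    finally show "(\<Sum>\<rho>\<in>conf d. \<Sum>i\<le>n. a \<rho> i * b \<rho> (n - i)) = op_pow d X n \<sigma> \<tau> / of_nat (fact n) * (z + w)^n" .
  qed
  finally show ?thesis unfolding expser_def by simp
qed

lemma hermitian_pow:
  fixes d :: "'a::finite \<Rightarrow> nat"
  assumes H: "hermitian d H" and s: "\<sigma> \<in> conf d" and t: "\<tau> \<in> conf d"
  shows "cnj (op_pow d H k \<sigma> \<tau>) = op_pow d H k \<tau> \<sigma>"
  using s t
proof (induction k arbitrary: \<sigma> \<tau>)
  case 0
  then show ?case by (auto simp: op_id_def)
next
  case (Suc k)
  have "cnj (op_pow d H (Suc k) \<sigma> \<tau>) = (\<Sum>\<rho>\<in>conf d. cnj (H \<sigma> \<rho>) * cnj (op_pow d H k \<rho> \<tau>))"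
    by (simp add: op_mult_def)
  also have "\<dots> = (\<Sum>\<rho>\<in>conf d. op_pow d H k \<tau> \<rho> * op_pow d H 1 \<rho> \<sigma>)"
  proof (rule sum.cong[OF refl])
    fix \<rho> assume r: "\<rho> \<in> conf d"
    have "op_pow d H 1 \<rho> \<sigma> = H \<rho> \<sigma>" using Suc.prems(1) by (simp add: op_mult_id_right)
    moreover have "cnj (H \<sigma> \<rho>) = H \<rho> \<sigma>" using H Suc.prems(1) r unfolding hermitian_def
      by (metis complex_cnj_cnj)
    ultimately show "cnj (H \<sigma> \<rho>) * cnj (op_pow d H k \<rho> \<tau>) = op_pow d H k \<tau> \<rho> * op_pow d H 1 \<rho> \<sigma>"
      using Suc.IH[OF r Suc.prems(2)] by simp
  qed
  also have "\<dots> = op_pow d H (k + 1) \<tau> \<sigma>"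
    using op_pow_add[OF Suc.prems(2), of H k 1 \<sigma>] by (simp add: op_mult_def)
  finally show ?case by simp
qed

lemma expser_cnj:
  fixes d :: "'a::finite \<Rightarrow> nat"
  assumes H: "hermitian d H" and s: "\<sigma> \<in> conf d" and t: "\<tau> \<in> conf d"
  shows "cnj (expser d H z \<sigma> \<tau>) = expser d H (cnj z) \<tau> \<sigma>"
proof -
  have "(\<lambda>k. op_pow d H k \<sigma> \<tau> / of_nat (fact k) * z^k) sums expser d H z \<sigma> \<tau>"
    unfolding expser_def using expser_summable[OF s] by (rule summable_sums)
  then have "(\<lambda>k. cnj (op_pow d H k \<sigma> \<tau> / of_nat (fact k) * z^k)) sums cnj (expser d H z \<sigma> \<tau>)"
    by (simp only: sums_cnj)
  then have "(\<lambda>k. op_pow d H k \<tau> \<sigma> / of_nat (fact k) * (cnj z)^k) sums cnj (expser d H z \<sigma> \<tau>)"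
    using hermitian_pow[OF H s t] by simp
  then show ?thesis unfolding expser_def by (simp add: sums_iff)
qed

lemma op_apply_mult:
  fixes d :: "'a::finite \<Rightarrow> nat"
  shows "op_apply d (op_mult d A B) v = op_apply d A (op_apply d B v)"
  unfolding op_apply_def op_mult_def
  by (intro ext) (simp add: sum_distrib_left sum_distrib_right mult.assoc, rule sum.swap)

lemma vec_norm_cong:
  "(\<And>\<sigma>. \<sigma> \<in> conf d \<Longrightarrow> v \<sigma> = w \<sigma>) \<Longrightarrow> vec_norm d v = vec_norm d w"
  unfolding vec_norm_def by (simp cong: sum.cong)

lemma vec_norm_sq:
  "complex_of_real ((vec_norm d v)^2) = (\<Sum>\<sigma>\<in>conf d. cnj (v \<sigma>) * v \<sigma>)"
proof -
  have "(vec_norm d v)^2 = (\<Sum>\<sigma>\<in>conf d. (cmod (v \<sigma>))^2)"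
    unfolding vec_norm_def by (simp add: sum_nonneg)
  moreover have "\<And>x::complex. complex_of_real ((cmod x)^2) = cnj x * x"
    by (metis complex_norm_square of_real_power mult.commute)
  ultimately show ?thesis by simp
qed

lemma isometry:
  fixes d :: "'a::finite \<Rightarrow> nat"
  assumes QR: "\<And>\<sigma> \<tau>. \<sigma> \<in> conf d \<Longrightarrow> \<tau> \<in> conf d \<Longrightarrow> op_mult d Q R \<sigma> \<tau> = op_id \<sigma> \<tau>"
    and adj: "\<And>\<sigma> \<tau>. \<sigma> \<in> conf d \<Longrightarrow> \<tau> \<in> conf d \<Longrightarrow> cnj (R \<sigma> \<tau>) = Q \<tau> \<sigma>"
  shows "vec_norm d (op_apply d R v) = vec_norm d v"
proof -
  have "complex_of_real ((vec_norm d (op_apply d R v))^2)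
      = (\<Sum>\<sigma>\<in>conf d. cnj (op_apply d R v \<sigma>) * op_apply d R v \<sigma>)"
    by (rule vec_norm_sq)
  also have "\<dots> = (\<Sum>\<sigma>\<in>conf d. \<Sum>\<rho>\<in>conf d. \<Sum>\<rho>'\<in>conf d. (cnj (v \<rho>) * v \<rho>') * (Q \<rho> \<sigma> * R \<sigma> \<rho>'))"
    unfolding op_apply_def
    by (intro sum.cong refl) (simp add: sum_distrib_left sum_distrib_right adj mult_ac)
  also have "\<dots> = (\<Sum>\<rho>\<in>conf d. \<Sum>\<sigma>\<in>conf d. \<Sum>\<rho>'\<in>conf d. (cnj (v \<rho>) * v \<rho>') * (Q \<rho> \<sigma> * R \<sigma> \<rho>'))"
    by (rule sum.swap)
  also have "\<dots> = (\<Sum>\<rho>\<in>conf d. \<Sum>\<rho>'\<in>conf d. \<Sum>\<sigma>\<in>conf d. (cnj (v \<rho>) * v \<rho>') * (Q \<rho> \<sigma> * R \<sigma> \<rho>'))"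
    by (rule sum.cong[OF refl], rule sum.swap)
  also have "\<dots> = (\<Sum>\<rho>\<in>conf d. \<Sum>\<rho>'\<in>conf d. (cnj (v \<rho>) * v \<rho>') * op_mult d Q R \<rho> \<rho>')"
    unfolding op_mult_def by (simp add: sum_distrib_left)
  also have "\<dots> = (\<Sum>\<rho>\<in>conf d. \<Sum>\<rho>'\<in>conf d. (cnj (v \<rho>) * v \<rho>') * op_id \<rho> \<rho>')"
    by (intro sum.cong refl) (simp add: QR)
  also have "\<dots> = (\<Sum>\<rho>\<in>conf d. cnj (v \<rho>) * v \<rho>)"
    unfolding op_id_def using conf_finite[of d]
    by (simp add: if_distrib sum.delta' cong: if_cong)
  also have "\<dots> = complex_of_real ((vec_norm d v)^2)"
    by (rule vec_norm_sq[symmetric])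
  finally have "(vec_norm d (op_apply d R v))^2 = (vec_norm d v)^2"
    using of_real_eq_iff by blast
  then show ?thesis using vec_norm_nonneg
    by (metis power2_eq_iff_nonneg)
qed



lemma heis_expser:
  "heis d H t X = op_mult d (op_mult d (expser d H (\<i> * of_real t)) X) (expser d H (- \<i> * of_real t))"
  unfolding heis_def op_exp_expser[symmetric] by simp

lemma heis_norm:
  fixes d :: "'a::finite \<Rightarrow> nat"
  assumes H: "hermitian d H"
  shows "op_norm d (heis d H t X) \<le> op_norm d X"
proof (rule op_norm_le)
  fix v assume v: "vec_norm d v \<le> 1"
  let ?U = "expser d H (\<i> * of_real t)" and ?V = "expser d H (- \<i> * of_real t)"
  have UV: "op_mult d ?U ?V \<sigma> \<tau> = op_id \<sigma> \<tau>" if "\<sigma> \<in> conf d" "\<tau> \<in> conf d" for \<sigma> \<tau>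
    using expser_mult[OF that, of H "\<i> * of_real t" "- \<i> * of_real t"] expser_zero[of d H \<sigma> \<tau>] by simp
  have VU: "op_mult d ?V ?U \<sigma> \<tau> = op_id \<sigma> \<tau>" if "\<sigma> \<in> conf d" "\<tau> \<in> conf d" for \<sigma> \<tau>
    using expser_mult[OF that, of H "- \<i> * of_real t" "\<i> * of_real t"] expser_zero[of d H \<sigma> \<tau>] by simp
  have aU: "cnj (?U \<sigma> \<tau>) = ?V \<tau> \<sigma>" if "\<sigma> \<in> conf d" "\<tau> \<in> conf d" for \<sigma> \<tau>
    using expser_cnj[OF H that] by simp
  have aV: "cnj (?V \<sigma> \<tau>) = ?U \<tau> \<sigma>" if "\<sigma> \<in> conf d" "\<tau> \<in> conf d" for \<sigma> \<tau>
    using expser_cnj[OF H that] by simp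
  have "op_apply d (heis d H t X) v = op_apply d ?U (op_apply d X (op_apply d ?V v))"
    unfolding heis_expser by (simp add: op_apply_mult)
  then have "vec_norm d (op_apply d (heis d H t X) v) = vec_norm d (op_apply d X (op_apply d ?V v))"
    using isometry[of d ?V ?U, OF VU aU] by simp
  also have "\<dots> \<le> op_norm d X * vec_norm d (op_apply d ?V v)" by (rule op_norm_apply)
  also have "vec_norm d (op_apply d ?V v) = vec_norm d v"
    using isometry[of d ?U ?V, OF UV aV] by simp
  also have "op_norm d X * vec_norm d v \<le> op_norm d X"
    using v op_norm_nonneg[of d X] vec_norm_nonneg[of d v] by (simp add: mult_left_le)
  finally show "vec_norm d (op_apply d (heis d H t X) v) \<le> op_norm d X" .
qed

lemma expser_isCont:
  fixes d :: "'a::finite \<Rightarrow> nat"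
  assumes "\<sigma> \<in> conf d"
  shows "isCont (\<lambda>z. expser d H z \<sigma> \<tau>) z"
  unfolding expser_def
  by (rule isCont_powser_converges_everywhere) (rule expser_summable[OF assms])

lemma expser_cont:
  fixes d :: "'a::finite \<Rightarrow> nat"
  assumes "\<sigma> \<in> conf d"
  shows "continuous_on UNIV (\<lambda>t::real. expser d H (c * of_real t) \<sigma> \<tau>)"
proof (rule continuous_at_imp_continuous_on, intro ballI)
  fix t :: real
  show "isCont (\<lambda>t::real. expser d H (c * of_real t) \<sigma> \<tau>) t"
    by (rule isCont_o2[OF _ expser_isCont[OF assms]]) (intro continuous_intros)
qed

lemma heis_cont:
  fixes d :: "'a::finite \<Rightarrow> nat"
  assumes "\<sigma> \<in> conf d"
  shows "continuous_on UNIV (\<lambda>t. heis d H t X \<sigma> \<tau>)"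
proof -
  have e: "(\<lambda>t. heis d H t X \<sigma> \<tau>) = (\<lambda>t. \<Sum>\<rho>\<in>conf d. (\<Sum>\<rho>'\<in>conf d. expser d H (\<i> * of_real t) \<sigma> \<rho>' * X \<rho>' \<rho>) * expser d H (- \<i> * of_real t) \<rho> \<tau>)"
    unfolding heis_expser op_mult_def by simp
  show ?thesis unfolding e
    by (intro continuous_on_sum continuous_on_mult continuous_on_const expser_cont assms) auto
qed

lemma heis_meas:
  fixes d :: "'a::finite \<Rightarrow> nat"
  assumes "\<sigma> \<in> conf d"
  shows "(\<lambda>t. heis d H t X \<sigma> \<tau>) \<in> borel_measurable borel"
  by (rule borel_measurable_continuous_onI[OF heis_cont[OF assms]])



lemma norm_integral_op:
  fixes d :: "'a::finite \<Rightarrow> nat" and Y :: "real \<Rightarrow> 'a qop" and b :: "real \<Rightarrow> real"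
  assumes int: "\<And>\<sigma> \<tau>. \<sigma> \<in> conf d \<Longrightarrow> \<tau> \<in> conf d \<Longrightarrow> integrable lborel (\<lambda>t. Y t \<sigma> \<tau>)"
    and bint: "integrable lborel b"
    and bnd: "\<And>t. op_norm d (Y t) \<le> b t"
  shows "op_norm d (\<lambda>\<sigma> \<tau>. LINT t|lborel. Y t \<sigma> \<tau>) \<le> (LINT t|lborel. b t)"
proof (rule op_norm_le)
  fix v assume v: "vec_norm d v \<le> 1"
  define W where "W = (\<lambda>\<sigma> \<tau>. LINT t|lborel. Y t \<sigma> \<tau>)"
  define w where "w = op_apply d W v"
  have intYv: "integrable lborel (\<lambda>t. op_apply d (Y t) v \<sigma>)" if "\<sigma> \<in> conf d" for \<sigma>
    unfolding op_apply_def by (intro Bochner_Integration.integrable_sum Bochner_Integration.integrable_mult_left) (use int[OF that] in auto)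
  have wsig: "w \<sigma> = (LINT t|lborel. op_apply d (Y t) v \<sigma>)" if "\<sigma> \<in> conf d" for \<sigma>
  proof -
    have "w \<sigma> = (\<Sum>\<tau>\<in>conf d. (LINT t|lborel. Y t \<sigma> \<tau> * v \<tau>))"
      unfolding w_def op_apply_def W_def by (simp add: integral_mult_left_zero)
    also have "\<dots> = (LINT t|lborel. (\<Sum>\<tau>\<in>conf d. Y t \<sigma> \<tau> * v \<tau>))"
      by (rule Bochner_Integration.integral_sum[symmetric]) (use int[OF that] in \<open>auto intro: integrable_mult_left\<close>)
    finally show ?thesis unfolding op_apply_def .
  qed
  define h where "h = (\<lambda>t. \<Sum>\<sigma>\<in>conf d. cnj (w \<sigma>) * op_apply d (Y t) v \<sigma>)"
  have inth: "integrable lborel h"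
    unfolding h_def by (intro Bochner_Integration.integrable_sum Bochner_Integration.integrable_mult_right) (use intYv in auto)
  have "complex_of_real ((vec_norm d w)^2) = (\<Sum>\<sigma>\<in>conf d. cnj (w \<sigma>) * w \<sigma>)"
    by (rule vec_norm_sq)
  also have "\<dots> = (\<Sum>\<sigma>\<in>conf d. (LINT t|lborel. cnj (w \<sigma>) * op_apply d (Y t) v \<sigma>))"
    by (intro sum.cong refl) (simp add: wsig integral_mult_right_zero)
  also have "\<dots> = (LINT t|lborel. h t)"
    unfolding h_def by (rule Bochner_Integration.integral_sum[symmetric]) (use intYv in \<open>auto intro: integrable_mult_right\<close>)
  finally have eq: "complex_of_real ((vec_norm d w)^2) = (LINT t|lborel. h t)" .
  have hb: "cmod (h t) \<le> vec_norm d w * b t" for t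
  proof -
    have "cmod (h t) \<le> (\<Sum>\<sigma>\<in>conf d. cmod (w \<sigma>) * cmod (op_apply d (Y t) v \<sigma>))"
      unfolding h_def by (rule order_trans[OF norm_sum]) (simp add: norm_mult)
    also have "\<dots> \<le> vec_norm d w * vec_norm d (op_apply d (Y t) v)"
      unfolding vec_norm_L2 using L2_set_mult_ineq[of "\<lambda>\<sigma>. cmod (w \<sigma>)" "\<lambda>\<sigma>. cmod (op_apply d (Y t) v \<sigma>)" "conf d"]
      by simp
    also have "\<dots> \<le> vec_norm d w * b t"
    proof (rule mult_left_mono[OF _ vec_norm_nonneg])
      have "vec_norm d (op_apply d (Y t) v) \<le> op_norm d (Y t) * vec_norm d v" by (rule op_norm_apply)
      also have "\<dots> \<le> op_norm d (Y t)"
        using v op_norm_nonneg[of d "Y t"] vec_norm_nonneg[of d v] by (simp add: mult_left_le)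
      finally show "vec_norm d (op_apply d (Y t) v) \<le> b t" using bnd[of t] by linarith
    qed
    finally show ?thesis .
  qed
  have "(vec_norm d w)^2 = cmod (LINT t|lborel. h t)"
    using eq[symmetric] by (metis norm_of_real abs_of_nonneg zero_le_power2)
  also have "\<dots> \<le> (LINT t|lborel. cmod (h t))" by (rule integral_norm_bound)
  also have "\<dots> \<le> (LINT t|lborel. vec_norm d w * b t)"
    by (rule Bochner_Integration.integral_mono) (use inth bint hb in auto)
  also have "\<dots> = vec_norm d w * (LINT t|lborel. b t)" by simp
  finally have sq: "(vec_norm d w)^2 \<le> vec_norm d w * (LINT t|lborel. b t)" .
  have bnn: "(LINT t|lborel. b t) \<ge> 0"
    by (rule integral_nonneg_AE) (use bnd op_norm_nonneg order_trans in blast)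
  have "vec_norm d w \<le> (LINT t|lborel. b t)"
  proof (cases "vec_norm d w = 0")
    case True then show ?thesis using bnn by simp
  next
    case False
    then have "vec_norm d w > 0" using vec_norm_nonneg[of d w] by linarith
    then show ?thesis using sq by (simp add: power2_eq_square)
  qed
  then show "vec_norm d (op_apply d (\<lambda>\<sigma> \<tau>. LINT t|lborel. Y t \<sigma> \<tau>) v) \<le> (LINT t|lborel. b t)"
    unfolding w_def W_def .
qed



lemma op_norm_cong:
  fixes d :: "'a::finite \<Rightarrow> nat"
  assumes "\<And>\<sigma> \<tau>. \<sigma> \<in> conf d \<Longrightarrow> \<tau> \<in> conf d \<Longrightarrow> X \<sigma> \<tau> = Y \<sigma> \<tau>"
  shows "op_norm d X = op_norm d Y"
proof -
  have "\<And>v. vec_norm d (op_apply d X v) = vec_norm d (op_apply d Y v)"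
    by (rule vec_norm_cong) (auto simp: op_apply_def assms intro!: sum.cong)
  then show ?thesis unfolding op_norm_def by simp
qed

lemma op_norm_scale:
  fixes d :: "'a::finite \<Rightarrow> nat"
  shows "op_norm d (\<lambda>\<sigma> \<tau>. c * Z \<sigma> \<tau>) \<le> cmod c * op_norm d Z"
proof (rule op_norm_le)
  fix v assume v: "vec_norm d v \<le> 1"
  have "op_apply d (\<lambda>\<sigma> \<tau>. c * Z \<sigma> \<tau>) v = (\<lambda>\<sigma>. c * op_apply d Z v \<sigma>)"
    unfolding op_apply_def by (simp add: sum_distrib_left mult.assoc)
  then have "vec_norm d (op_apply d (\<lambda>\<sigma> \<tau>. c * Z \<sigma> \<tau>) v) = cmod c * vec_norm d (op_apply d Z v)"
    by (simp add: vec_norm_scale)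
  also have "\<dots> \<le> cmod c * op_norm d Z"
    by (rule mult_left_mono[OF op_norm_ge[OF v]]) simp
  finally show "vec_norm d (op_apply d (\<lambda>\<sigma> \<tau>. c * Z \<sigma> \<tau>) v) \<le> cmod c * op_norm d Z" .
qed

lemma construct:
  fixes d :: "'a::finite \<Rightarrow> nat" and Sel :: "real \<Rightarrow> 'a qop" and e :: "real \<Rightarrow> real"
  assumes dims: "\<forall>i. d i \<ge> 1" and H: "hermitian d H" and gp: "\<gamma> > 0"
    and Gi: "integrable lborel G"
    and supS: "\<And>t. supported_on d S (Sel t)"
    and meas: "\<And>\<sigma> \<tau>. \<sigma> \<in> conf d \<Longrightarrow> \<tau> \<in> conf d \<Longrightarrow> (\<lambda>t. Sel t \<sigma> \<tau>) \<in> borel_measurable borel"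
    and bdd: "\<And>\<sigma> \<tau>. \<sigma> \<in> conf d \<Longrightarrow> \<tau> \<in> conf d \<Longrightarrow> \<exists>M. \<forall>t. cmod (Sel t \<sigma> \<tau>) \<le> M"
    and zero: "\<And>t. \<not> \<bar>t\<bar> < T \<Longrightarrow> Sel t = (\<lambda>_ _. 0)"
    and err: "\<And>t. \<bar>t\<bar> < T \<Longrightarrow> op_norm d (op_diff (heis d H t X) (Sel t)) \<le> e t"
    and emeas: "e \<in> borel_measurable borel"
    and ebdd: "\<And>t. \<bar>t\<bar> < T \<Longrightarrow> \<bar>e t\<bar> \<le> E"
  shows "\<exists>W. supported_on d S W \<and> op_norm d (op_diff (filtered d H \<gamma> G X) W)
           \<le> (LINT t|lborel. \<gamma> * \<bar>G (\<gamma> * t)\<bar> * (if \<bar>t\<bar> < T then e t else op_norm d X))"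
proof -
  define W where "W = (\<lambda>\<sigma> \<tau>. complex_of_real \<gamma> * (LINT t|lborel. complex_of_real (G (\<gamma> * t)) * Sel t \<sigma> \<tau>))"
  define opn where "opn = op_norm d X"
  have opn0: "opn \<ge> 0" unfolding opn_def by (rule op_norm_nonneg)
  have Gg: "integrable lborel (\<lambda>t. G (\<gamma> * t))"
    using lborel_integrable_real_affine[OF Gi, of \<gamma> 0] gp by simp
  have Gmeas[measurable]: "(\<lambda>t. G (\<gamma> * t)) \<in> borel_measurable borel"
    using borel_measurable_integrable[OF Gg] by simp
  have emeas'[measurable]: "e \<in> borel_measurable borel" by (rule emeas)
  have int1: "integrable lborel (\<lambda>t. complex_of_real (G (\<gamma> * t)) * heis d H t X \<sigma> \<tau>)"
    if s: "\<sigma> \<in> conf d" and t: "\<tau> \<in> conf d" for \<sigma> \<tau>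
  proof (rule Bochner_Integration.integrable_bound)
    show "integrable lborel (\<lambda>t. G (\<gamma> * t) * opn)" using Gg by simp
    have [measurable]: "(\<lambda>t. heis d H t X \<sigma> \<tau>) \<in> borel_measurable borel" by (rule heis_meas[OF s])
    show "(\<lambda>t. complex_of_real (G (\<gamma> * t)) * heis d H t X \<sigma> \<tau>) \<in> borel_measurable lborel"
      by simp
    show "AE t in lborel. norm (complex_of_real (G (\<gamma> * t)) * heis d H t X \<sigma> \<tau>) \<le> norm (G (\<gamma> * t) * opn)"
    proof (intro AE_I2)
      fix t
      have "cmod (heis d H t X \<sigma> \<tau>) \<le> opn"
        unfolding opn_def using entry_le_op_norm[OF s t] heis_norm[OF H] order_trans by blast
      then show "norm (complex_of_real (G (\<gamma> * t)) * heis d H t X \<sigma> \<tau>) \<le> norm (G (\<gamma> * t) * opn)"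
        using opn0 by (simp add: norm_mult abs_mult mult_left_mono)
    qed
  qed
  have int2: "integrable lborel (\<lambda>t. complex_of_real (G (\<gamma> * t)) * Sel t \<sigma> \<tau>)"
    if s: "\<sigma> \<in> conf d" and t: "\<tau> \<in> conf d" for \<sigma> \<tau>
  proof -
    obtain M where M: "\<And>t. cmod (Sel t \<sigma> \<tau>) \<le> M" using bdd[OF s t] by blast
    show ?thesis
    proof (rule Bochner_Integration.integrable_bound)
      show "integrable lborel (\<lambda>t. G (\<gamma> * t) * M)" using Gg by simp
      have [measurable]: "(\<lambda>t. Sel t \<sigma> \<tau>) \<in> borel_measurable borel" by (rule meas[OF s t])
      show "(\<lambda>t. complex_of_real (G (\<gamma> * t)) * Sel t \<sigma> \<tau>) \<in> borel_measurable lborel"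
        by simp
      show "AE t in lborel. norm (complex_of_real (G (\<gamma> * t)) * Sel t \<sigma> \<tau>) \<le> norm (G (\<gamma> * t) * M)"
      proof (intro AE_I2)
        fix t
        have "M \<ge> 0" using M[of 0] norm_ge_zero order_trans by blast
        then show "norm (complex_of_real (G (\<gamma> * t)) * Sel t \<sigma> \<tau>) \<le> norm (G (\<gamma> * t) * M)"
          using M[of t] by (simp add: norm_mult abs_mult mult_left_mono)
      qed
    qed
  qed
  have supW: "supported_on d S W"
  proof (rule supported_cong[OF dims])
    fix \<sigma> \<tau> assume s: "\<sigma> \<in> conf d" and t: "\<tau> \<in> conf d" and a: "agree S \<sigma> \<tau>"
    have "\<And>x. Sel x \<sigma> \<tau> = Sel x (rst S \<sigma>) (rst S \<tau>)"
      using supS supported_iff[OF dims] s t a by metis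
    then show "W \<sigma> \<tau> = W (rst S \<sigma>) (rst S \<tau>)" unfolding W_def by simp
  next
    fix \<sigma> \<tau> assume s: "\<sigma> \<in> conf d" and t: "\<tau> \<in> conf d" and a: "\<not> agree S \<sigma> \<tau>"
    have "\<And>x. Sel x \<sigma> \<tau> = 0"
      using supS supported_iff[OF dims] s t a by metis
    then show "W \<sigma> \<tau> = 0" unfolding W_def by simp
  qed
  define Y where "Y = (\<lambda>t \<sigma> \<tau>. complex_of_real (\<gamma> * G (\<gamma> * t)) * op_diff (heis d H t X) (Sel t) \<sigma> \<tau>)"
  define b where "b = (\<lambda>t. \<gamma> * \<bar>G (\<gamma> * t)\<bar> * (if \<bar>t\<bar> < T then e t else opn))"
  have eqn: "op_diff (filtered d H \<gamma> G X) W \<sigma> \<tau> = (LINT t|lborel. Y t \<sigma> \<tau>)"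
    if s: "\<sigma> \<in> conf d" and t: "\<tau> \<in> conf d" for \<sigma> \<tau>
  proof -
    have "op_diff (filtered d H \<gamma> G X) W \<sigma> \<tau> = complex_of_real \<gamma> *
      ((LINT t|lborel. complex_of_real (G (\<gamma> * t)) * heis d H t X \<sigma> \<tau>) - (LINT t|lborel. complex_of_real (G (\<gamma> * t)) * Sel t \<sigma> \<tau>))"
      unfolding op_diff_def filtered_def W_def by (simp add: algebra_simps)
    also have "\<dots> = complex_of_real \<gamma> * (LINT t|lborel. complex_of_real (G (\<gamma> * t)) * heis d H t X \<sigma> \<tau> - complex_of_real (G (\<gamma> * t)) * Sel t \<sigma> \<tau>)"
      using int1[OF s t] int2[OF s t] by simp
    also have "\<dots> = (LINT t|lborel. complex_of_real \<gamma> * (complex_of_real (G (\<gamma> * t)) * heis d H t X \<sigma> \<tau> - complex_of_real (G (\<gamma> * t)) * Sel t \<sigma> \<tau>))"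
      by (rule integral_mult_right_zero[symmetric])
    also have "\<dots> = (LINT t|lborel. Y t \<sigma> \<tau>)"
      unfolding Y_def op_diff_def by (intro Bochner_Integration.integral_cong refl) (simp add: algebra_simps)
    finally show ?thesis .
  qed
  have intY: "integrable lborel (\<lambda>t. Y t \<sigma> \<tau>)" if s: "\<sigma> \<in> conf d" and t: "\<tau> \<in> conf d" for \<sigma> \<tau>
  proof -
    have "integrable lborel (\<lambda>t. complex_of_real \<gamma> * (complex_of_real (G (\<gamma> * t)) * heis d H t X \<sigma> \<tau> - complex_of_real (G (\<gamma> * t)) * Sel t \<sigma> \<tau>))"
      using int1[OF s t] int2[OF s t] by simp
    then show ?thesis unfolding Y_def op_diff_def by (simp add: algebra_simps)
  qed
  have intb: "integrable lborel b"
  proof (rule Bochner_Integration.integrable_bound)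
    show "integrable lborel (\<lambda>t. \<gamma> * G (\<gamma> * t) * (\<bar>E\<bar> + opn))" using Gg by simp
    show "b \<in> borel_measurable lborel" unfolding b_def by simp
    show "AE t in lborel. norm (b t) \<le> norm (\<gamma> * G (\<gamma> * t) * (\<bar>E\<bar> + opn))"
    proof (intro AE_I2)
      fix t
      have "\<bar>if \<bar>t\<bar> < T then e t else opn\<bar> \<le> \<bar>E\<bar> + opn"
        using ebdd[of t] opn0 by auto
      then show "norm (b t) \<le> norm (\<gamma> * G (\<gamma> * t) * (\<bar>E\<bar> + opn))"
        unfolding b_def using gp opn0 by (simp add: abs_mult mult_left_mono)
    qed
  qed
  have bnd: "op_norm d (Y t) \<le> b t" for t
  proof -
    have "op_norm d (Y t) \<le> cmod (complex_of_real (\<gamma> * G (\<gamma> * t))) * op_norm d (op_diff (heis d H t X) (Sel t))"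
      unfolding Y_def by (rule op_norm_scale)
    also have "\<dots> = \<gamma> * \<bar>G (\<gamma> * t)\<bar> * op_norm d (op_diff (heis d H t X) (Sel t))"
    proof -
      have "cmod (complex_of_real (\<gamma> * G (\<gamma> * t))) = \<gamma> * \<bar>G (\<gamma> * t)\<bar>"
        using gp by (simp only: norm_of_real abs_mult)
      then show ?thesis by simp
    qed
    also have "\<dots> \<le> b t"
    proof (cases "\<bar>t\<bar> < T")
      case True
      then show ?thesis unfolding b_def using err[OF True] gp by (simp add: mult_left_mono)
    next
      case False
      have "op_diff (heis d H t X) (Sel t) = heis d H t X"
        unfolding zero[OF False] op_diff_def by simp
      then show ?thesis unfolding b_def opn_def using False heis_norm[OF H, of t X] gp
        by (simp add: mult_left_mono)
    qed
    finally show ?thesis .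
  qed
  have "op_norm d (op_diff (filtered d H \<gamma> G X) W) = op_norm d (\<lambda>\<sigma> \<tau>. LINT t|lborel. Y t \<sigma> \<tau>)"
    by (rule op_norm_cong) (rule eqn)
  also have "\<dots> \<le> (LINT t|lborel. b t)"
    by (rule norm_integral_op[OF intY intb bnd])
  finally show ?thesis using supW unfolding b_def opn_def by blast
qed

lemma heis_unif:
  fixes d :: "'a::finite \<Rightarrow> nat"
  assumes w: "\<omega> > 0"
  shows "\<exists>\<delta>>0. \<forall>t s. \<bar>t\<bar> \<le> T \<longrightarrow> \<bar>s\<bar> \<le> T \<longrightarrow> \<bar>t - s\<bar> < \<delta> \<longrightarrow>
           op_norm d (op_diff (heis d H t X) (heis d H s X)) < \<omega>"
proof -
  define D where "D = (\<lambda>p::real\<times>real. \<Sum>\<sigma>\<in>conf d. \<Sum>\<tau>\<in>conf d. cmod (heis d H (fst p) X \<sigma> \<tau> - heis d H (snd p) X \<sigma> \<tau>))"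
  have cD: "continuous_on UNIV D"
    unfolding D_def
    by (intro continuous_on_sum continuous_intros continuous_on_compose2[OF heis_cont]) auto
  have "uniformly_continuous_on ({-T..T} \<times> {-T..T}) D"
    by (rule compact_uniformly_continuous[OF continuous_on_subset[OF cD]]) (auto intro: compact_Times)
  then obtain \<delta> where dp: "\<delta> > 0" and dd: "\<And>x x'. x \<in> {-T..T} \<times> {-T..T} \<Longrightarrow> x' \<in> {-T..T} \<times> {-T..T} \<Longrightarrow>
      dist x' x < \<delta> \<Longrightarrow> dist (D x') (D x) < \<omega>"
    unfolding uniformly_continuous_on_def using w by metis
  show ?thesis
  proof (intro exI[of _ \<delta>] conjI dp allI impI)
    fix t s :: real assume t: "\<bar>t\<bar> \<le> T" and s: "\<bar>s\<bar> \<le> T" and ts: "\<bar>t - s\<bar> < \<delta>"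
    have "dist (t, s) (s, s) < \<delta>" using ts by (simp add: dist_Pair_Pair dist_real_def)
    then have "dist (D (t, s)) (D (s, s)) < \<omega>" using t s by (intro dd) auto
    moreover have "D (s, s) = 0" unfolding D_def by simp
    ultimately have "D (t, s) < \<omega>" by (simp add: dist_real_def)
    moreover have "op_norm d (op_diff (heis d H t X) (heis d H s X)) \<le> D (t, s)"
      unfolding D_def using op_norm_crude[of d "op_diff (heis d H t X) (heis d H s X)"]
      by (simp add: op_diff_def)
    ultimately show "op_norm d (op_diff (heis d H t X) (heis d H s X)) < \<omega>" by linarith
  qed
qed



lemma lint_subst:
  fixes G h :: "real \<Rightarrow> real"
  assumes gp: "\<gamma> > 0"
  shows "(LINT t|lborel. \<gamma> * \<bar>G (\<gamma> * t)\<bar> * h (\<gamma> * t)) = (LINT u|lborel. \<bar>G u\<bar> * h u)"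
proof -
  have "(LINT u|lborel. \<bar>G u\<bar> * h u) = \<bar>\<gamma>\<bar> *\<^sub>R (LINT x|lborel. \<bar>G (0 + \<gamma> * x)\<bar> * h (0 + \<gamma> * x))"
    using gp by (intro lborel_integral_real_affine) simp
  also have "\<dots> = (LINT t|lborel. \<gamma> * (\<bar>G (\<gamma> * t)\<bar> * h (\<gamma> * t)))"
    using gp by simp
  finally show ?thesis by (simp add: mult.assoc)
qed

lemma int_mult_bdd:
  fixes G h :: "real \<Rightarrow> real"
  assumes Gi: "integrable lborel G" and hm: "h \<in> borel_measurable borel" and hb: "\<And>u. \<bar>h u\<bar> \<le> C"
  shows "integrable lborel (\<lambda>u. \<bar>G u\<bar> * h u)"
proof (rule Bochner_Integration.integrable_bound)
  show "integrable lborel (\<lambda>u. \<bar>G u\<bar> * C)" using Gi by simp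
  have [measurable]: "G \<in> borel_measurable borel" using borel_measurable_integrable[OF Gi] by simp
  have [measurable]: "h \<in> borel_measurable borel" by (rule hm)
  show "(\<lambda>u. \<bar>G u\<bar> * h u) \<in> borel_measurable lborel" by simp
  have C0: "C \<ge> 0" using hb[of 0] by linarith
  show "AE u in lborel. norm (\<bar>G u\<bar> * h u) \<le> norm (\<bar>G u\<bar> * C)"
    using hb C0 by (intro AE_I2) (simp add: abs_mult mult_left_mono)
qed

lemma supported_zero: "supported_on d S (\<lambda>_ _. 0)"
  unfolding supported_on_def by (intro exI[of _ "\<lambda>_ _. 0"]) auto

lemma supported_conf_cong:
  assumes "\<And>\<sigma> \<tau>. \<sigma> \<in> conf d \<Longrightarrow> \<tau> \<in> conf d \<Longrightarrow> X \<sigma> \<tau> = Y \<sigma> \<tau>"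
    and "supported_on d S X"
  shows "supported_on d S Y"
proof -
  from assms(2) obtain M where M: "\<forall>\<sigma>\<in>conf d. \<forall>\<tau>\<in>conf d.
      X \<sigma> \<tau> = (if (\<forall>i. i \<notin> S \<longrightarrow> \<sigma> i = \<tau> i)
                 then M (\<lambda>i. if i \<in> S then \<sigma> i else 0) (\<lambda>i. if i \<in> S then \<tau> i else 0)
                 else 0)" unfolding supported_on_def by blast
  show ?thesis unfolding supported_on_def
    by (rule exI[of _ M]) (use M assms(1) in auto)
qed

lemma op_norm_zero_entries:
  fixes d :: "'a::finite \<Rightarrow> nat"
  assumes "op_norm d (op_diff X Y) \<le> 0" "\<sigma> \<in> conf d" "\<tau> \<in> conf d"
  shows "X \<sigma> \<tau> = Y \<sigma> \<tau>"
proof -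
  have "cmod (op_diff X Y \<sigma> \<tau>) \<le> 0"
    using entry_le_op_norm[OF assms(2,3), of "op_diff X Y"] assms(1) by linarith
  then show ?thesis unfolding op_diff_def by simp
qed

lemma op_norm_self:
  fixes d :: "'a::finite \<Rightarrow> nat"
  shows "op_norm d (op_diff X X) \<le> 0"
  using op_norm_crude[of d "op_diff X X"] by (simp add: op_diff_def)



lemma floor_rep:
  fixes t :: real and N :: nat
  assumes N: "N > 0"
  defines "k \<equiv> \<lfloor>real N * t\<rfloor>"
  shows "\<bar>(if k \<ge> 0 then real_of_int k / real N else real_of_int (k + 1) / real N)\<bar> \<le> \<bar>t\<bar>"
    and "\<bar>t - (if k \<ge> 0 then real_of_int k / real N else real_of_int (k + 1) / real N)\<bar> \<le> 1 / real N"
proof -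
  have k1: "real_of_int k \<le> real N * t" unfolding k_def by linarith
  have k2: "real N * t < real_of_int k + 1" unfolding k_def by linarith
  have Np: "real N > 0" using N by simp
  show "\<bar>(if k \<ge> 0 then real_of_int k / real N else real_of_int (k + 1) / real N)\<bar> \<le> \<bar>t\<bar>"
  proof (cases "k \<ge> 0")
    case True
    then have "real_of_int k / real N \<le> t" "0 \<le> real_of_int k / real N"
      using k1 Np by (auto simp: field_simps)
    then show ?thesis using True by auto
  next
    case False
    then have "k + 1 \<le> 0" by simp
    define x where "x = real_of_int (k+1) / real N"
    have "x \<le> 0" "t < x"
      using k2 Np \<open>k + 1 \<le> 0\<close> unfolding x_def by (auto simp: field_simps divide_nonpos_pos)
    then have "\<bar>x\<bar> \<le> \<bar>t\<bar>" by (simp add: abs_if)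
    then show ?thesis using False unfolding x_def by simp
  qed
  show "\<bar>t - (if k \<ge> 0 then real_of_int k / real N else real_of_int (k + 1) / real N)\<bar> \<le> 1 / real N"
  proof (cases "k \<ge> 0")
    case True
    have "real_of_int k / real N \<le> t" "t < real_of_int k / real N + 1 / real N"
      using k1 k2 Np by (auto simp: field_simps)
    then show ?thesis using True by auto
  next
    case False
    have "real_of_int (k+1) / real N - 1 / real N \<le> t" "t < real_of_int (k+1) / real N"
      using k1 k2 Np by (auto simp: field_simps)
    then show ?thesis using False by auto
  qed
qed

lemma floor_range:
  fixes t T :: real and N :: nat
  assumes "\<bar>t\<bar> < T"
  shows "\<lfloor>real N * t\<rfloor> \<in> {-\<lceil>real N * T\<rceil>..\<lceil>real N * T\<rceil>}"
proof -
  have "-T \<le> t" "t \<le> T" using assms by auto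
  then have "real N * (-T) \<le> real N * t" "real N * t \<le> real N * T"
    by (intro mult_left_mono; simp)+
  then have "- (real N * T) \<le> real N * t" "real N * t \<le> real N * T" by auto
  then show ?thesis by (auto simp: le_floor_iff floor_le_iff ceiling_le_iff) linarith+
qed


theorem lemma2:
  fixes d :: "'a::{finite,metric_space} \<Rightarrow> nat"
    and HZ :: "'a set \<Rightarrow> 'a qop" and H0 :: "'a qop"
    and R J vLR \<gamma> l :: real and g G :: "real \<Rightarrow> real"
    and A :: "'a set" and Op :: "'a qop"
  assumes dims: "\<forall>i. d i \<ge> 1"
    and H0_def: "H0 = (\<lambda>\<sigma> \<tau>. \<Sum>Z\<in>UNIV. HZ Z \<sigma> \<tau>)"
    and terms: "\<forall>Z. hermitian d (HZ Z) \<and> supported_on d Z (HZ Z)"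
    and range: "\<forall>Z. (\<exists>\<sigma>\<in>conf d. \<exists>\<tau>\<in>conf d. HZ Z \<sigma> \<tau> \<noteq> 0) \<longrightarrow> (\<forall>x\<in>Z. \<forall>y\<in>Z. dist x y \<le> R)"
    and strength: "\<forall>i. (\<Sum>Z\<in>{Z. i \<in> Z}. op_norm d (HZ Z)) \<le> J"
    and vLR_pos: "vLR > 0"
    and g_decay: "\<forall>\<kappa>>0. ((\<lambda>x. g x * exp (\<kappa> * x)) \<longlongrightarrow> 0) at_top"
    and LR: "\<forall>B X r t. supported_on d B X \<and> r > 0 \<and> \<bar>t\<bar> \<le> r / vLR \<longrightarrow>
               (\<exists>X'. supported_on d (bl r B) X' \<and>
                  op_norm d (op_diff (heis d H0 t X) X') \<le> vLR * \<bar>t\<bar> / r * g r * real (card B) * op_norm d X)"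
    and gamma_pos: "\<gamma> > 0"
    and G_even: "\<forall>t. G (- t) = G t"
    and G_int: "integrable lborel G"
    and supp: "supported_on d A Op"
    and l_pos: "l > 0"
  shows "\<exists>W. supported_on d (bl l A) W \<and>
           op_norm d (op_diff (filtered d H0 \<gamma> G Op) W)
             \<le> ((LINT u:{u. \<bar>u\<bar> \<ge> l * \<gamma> / vLR}|lborel. \<bar>G u\<bar>)
                 + g l * real (card A) * (LINT u|lborel. \<bar>G u\<bar>)) * op_norm d Op"
proof -
  have H: "hermitian d H0"
    unfolding hermitian_def H0_def
  proof (intro ballI)
    fix \<sigma> \<tau> assume s: "\<sigma> \<in> conf d" and t: "\<tau> \<in> conf d"
    show "(\<Sum>Z\<in>UNIV. HZ Z \<sigma> \<tau>) = cnj (\<Sum>Z\<in>UNIV. HZ Z \<tau> \<sigma>)"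
      unfolding cnj_sum
    proof (rule sum.cong[OF refl])
      fix Z assume "Z \<in> (UNIV :: 'a set set)"
      have "hermitian d (HZ Z)" using terms by blast
      then show "HZ Z \<sigma> \<tau> = cnj (HZ Z \<tau> \<sigma>)" unfolding hermitian_def using s t by blast
    qed
  qed
  define T where "T = l / vLR"
  have Tp: "T > 0" unfolding T_def using l_pos vLR_pos by simp
  define c0 where "c0 = op_norm d Op"
  have c0: "c0 \<ge> 0" unfolding c0_def by (rule op_norm_nonneg)
  define a where "a = g l * real (card A) * c0"
  have LR': "\<exists>X'. supported_on d (bl l A) X' \<and> op_norm d (op_diff (heis d H0 t Op) X') \<le> a * \<bar>t\<bar> / T"
    if t: "\<bar>t\<bar> \<le> T" for t
  proof -
    have "\<bar>t\<bar> \<le> l / vLR" using t unfolding T_def .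
    then obtain X' where X': "supported_on d (bl l A) X'"
      "op_norm d (op_diff (heis d H0 t Op) X') \<le> vLR * \<bar>t\<bar> / l * g l * real (card A) * op_norm d Op"
      using LR[rule_format, of A Op l t] supp l_pos by blast
    moreover have "vLR * \<bar>t\<bar> / l * g l * real (card A) * op_norm d Op = a * \<bar>t\<bar> / T"
      unfolding a_def T_def c0_def using vLR_pos l_pos by (simp add: field_simps)
    ultimately show ?thesis by auto
  qed
  have a0: "a \<ge> 0"
  proof -
    obtain X' where "op_norm d (op_diff (heis d H0 T Op) X') \<le> a * \<bar>T\<bar> / T"
      using LR'[of T] Tp by auto
    then show ?thesis using op_norm_nonneg[of d "op_diff (heis d H0 T Op) X'"] Tp by simp
  qed
  have gT: "l * \<gamma> / vLR = \<gamma> * T" unfolding T_def by simp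
  have Gabs: "integrable lborel (\<lambda>u. \<bar>G u\<bar>)" using G_int by simp
  define tail where "tail = (LINT u|lborel. \<bar>G u\<bar> * (if \<gamma> * T \<le> \<bar>u\<bar> then 1 else 0))"
  have tail_eq: "(LINT u:{u. \<bar>u\<bar> \<ge> l * \<gamma> / vLR}|lborel. \<bar>G u\<bar>) = tail"
    unfolding set_lebesgue_integral_def tail_def gT
    by (intro Bochner_Integration.integral_cong refl) (simp add: indicator_def)
  have K: "((LINT u:{u. \<bar>u\<bar> \<ge> l * \<gamma> / vLR}|lborel. \<bar>G u\<bar>)
                 + g l * real (card A) * (LINT u|lborel. \<bar>G u\<bar>)) * op_norm d Op
         = c0 * tail + a * (LINT u|lborel. \<bar>G u\<bar>)"
    unfolding tail_eq a_def c0_def by (simp add: algebra_simps)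
  have c0tail: "(LINT u|lborel. \<bar>G u\<bar> * (if \<gamma> * T \<le> \<bar>u\<bar> then c0 else 0)) = c0 * tail"
  proof -
    have "(LINT u|lborel. \<bar>G u\<bar> * (if \<gamma> * T \<le> \<bar>u\<bar> then c0 else 0))
        = (LINT u|lborel. c0 * (\<bar>G u\<bar> * (if \<gamma> * T \<le> \<bar>u\<bar> then 1 else 0)))"
      by (intro Bochner_Integration.integral_cong refl) simp
    also have "\<dots> = c0 * tail" unfolding tail_def by simp
    finally show ?thesis .
  qed
  have heis_meas'[measurable]: "(\<lambda>t. heis d H0 t Op \<sigma> \<tau>) \<in> borel_measurable borel"
    if "\<sigma> \<in> conf d" for \<sigma> \<tau> using heis_meas[OF that] .
  have heis_bdd: "cmod (heis d H0 t Op \<sigma> \<tau>) \<le> c0" if "\<sigma> \<in> conf d" "\<tau> \<in> conf d" for \<sigma> \<tau> t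
    unfolding c0_def using entry_le_op_norm[OF that] heis_norm[OF H] order_trans by blast
  show ?thesis
  proof (cases "a = 0")
    case True
    define Sel where "Sel = (\<lambda>t. if \<bar>t\<bar> < T then heis d H0 t Op else (\<lambda>_ _. 0))"
    have supS: "supported_on d (bl l A) (Sel t)" for t
    proof (cases "\<bar>t\<bar> < T")
      case True
      then obtain X' where X': "supported_on d (bl l A) X'" "op_norm d (op_diff (heis d H0 t Op) X') \<le> a * \<bar>t\<bar> / T"
        using LR'[of t] by auto
      then have "op_norm d (op_diff (heis d H0 t Op) X') \<le> 0" using \<open>a = 0\<close> by simp
      then have "\<And>\<sigma> \<tau>. \<sigma> \<in> conf d \<Longrightarrow> \<tau> \<in> conf d \<Longrightarrow> X' \<sigma> \<tau> = heis d H0 t Op \<sigma> \<tau>"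
        using op_norm_zero_entries by metis
      then have "supported_on d (bl l A) (heis d H0 t Op)"
        using supported_conf_cong X'(1) by blast
      then show ?thesis unfolding Sel_def using True by simp
    next
      case False
      then show ?thesis unfolding Sel_def by (simp add: supported_zero)
    qed
    have meas: "(\<lambda>t. Sel t \<sigma> \<tau>) \<in> borel_measurable borel" if "\<sigma> \<in> conf d" "\<tau> \<in> conf d" for \<sigma> \<tau>
    proof -
      have [measurable]: "(\<lambda>t. heis d H0 t Op \<sigma> \<tau>) \<in> borel_measurable borel" using that heis_meas' by blast
      have "(\<lambda>t. Sel t \<sigma> \<tau>) = (\<lambda>t. if \<bar>t\<bar> < T then heis d H0 t Op \<sigma> \<tau> else 0)"
        unfolding Sel_def by auto
      also have "\<dots> \<in> borel_measurable borel" by measurable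
      finally show ?thesis .
    qed
    have bdd: "\<exists>M. \<forall>t. cmod (Sel t \<sigma> \<tau>) \<le> M" if "\<sigma> \<in> conf d" "\<tau> \<in> conf d" for \<sigma> \<tau>
      using heis_bdd[OF that] c0 unfolding Sel_def by (intro exI[of _ c0]) auto
    have err: "op_norm d (op_diff (heis d H0 t Op) (Sel t)) \<le> 0" if "\<bar>t\<bar> < T" for t
      unfolding Sel_def using that op_norm_self by simp
    have ex: "\<exists>W. supported_on d (bl l A) W \<and> op_norm d (op_diff (filtered d H0 \<gamma> G Op) W)
           \<le> (LINT t|lborel. \<gamma> * \<bar>G (\<gamma> * t)\<bar> * (if \<bar>t\<bar> < T then (\<lambda>_. 0) t else op_norm d Op))"
      by (rule construct[where Sel=Sel and e="\<lambda>_. 0" and E=0])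
         (use dims H gamma_pos G_int supS meas bdd err in \<open>auto simp: Sel_def\<close>)
    have "(LINT t|lborel. \<gamma> * \<bar>G (\<gamma> * t)\<bar> * (if \<bar>t\<bar> < T then (\<lambda>_. 0) t else op_norm d Op))
        = (LINT t|lborel. \<gamma> * \<bar>G (\<gamma> * t)\<bar> * (\<lambda>u. if \<gamma> * T \<le> \<bar>u\<bar> then c0 else 0) (\<gamma> * t))"
      using gamma_pos
      by (intro Bochner_Integration.integral_cong refl) (simp add: c0_def abs_mult not_less)
    also have "\<dots> = (LINT u|lborel. \<bar>G u\<bar> * (if \<gamma> * T \<le> \<bar>u\<bar> then c0 else 0))"
      by (rule lint_subst[OF gamma_pos])
    also have "\<dots> = c0 * tail" by (rule c0tail)
    also have "\<dots> = ((LINT u:{u. \<bar>u\<bar> \<ge> l * \<gamma> / vLR}|lborel. \<bar>G u\<bar>)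
                 + g l * real (card A) * (LINT u|lborel. \<bar>G u\<bar>)) * op_norm d Op"
      unfolding K using True by simp
    finally show ?thesis using ex by auto
  next
    case False
    then have ap: "a > 0" using a0 by simp
    have gTp: "\<gamma> * T > 0" using gamma_pos Tp by simp
    define fP where "fP = (\<lambda>u. \<bar>G u\<bar> * (if \<bar>u\<bar> < \<gamma> * T then 1 else (0::real)))"
    define fS where "fS = (\<lambda>u. \<bar>G u\<bar> * (if \<bar>u\<bar> < \<gamma> * T then 1 - \<bar>u\<bar> / (\<gamma> * T) else 0))"
    define fC where "fC = (\<lambda>u. \<bar>G u\<bar> * (if \<gamma> * T \<le> \<bar>u\<bar> then c0 else 0))"
    define P where "P = (LINT u|lborel. fP u)"
    define s where "s = (LINT u|lborel. fS u)"
    have ratio: "0 \<le> \<bar>u\<bar> / (\<gamma> * T) \<and> \<bar>u\<bar> / (\<gamma> * T) < 1" if "\<bar>u\<bar> < \<gamma> * T" for u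
      using that gTp by (simp add: divide_less_eq_1_pos)
    have m1: "(\<lambda>u::real. if \<bar>u\<bar> < \<gamma> * T then 1 else (0::real)) \<in> borel_measurable borel" by measurable
    have m2: "(\<lambda>u::real. if \<bar>u\<bar> < \<gamma> * T then 1 - \<bar>u\<bar> / (\<gamma> * T) else (0::real)) \<in> borel_measurable borel" by measurable
    have m3: "(\<lambda>u::real. if \<gamma> * T \<le> \<bar>u\<bar> then c0 else (0::real)) \<in> borel_measurable borel" by measurable
    have intP: "integrable lborel fP"
      unfolding fP_def by (rule int_mult_bdd[OF G_int m1, where C=1]) simp
    have intS: "integrable lborel fS"
      unfolding fS_def by (rule int_mult_bdd[OF G_int m2, where C=1]) (use ratio in auto)
    have intC: "integrable lborel fC"
      unfolding fC_def by (rule int_mult_bdd[OF G_int m3, where C=c0]) (use c0 in auto)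
    have fPnn: "\<And>u. fP u \<ge> 0" unfolding fP_def by simp
    have fSnn: "\<And>u. fS u \<ge> 0" unfolding fS_def using ratio by simp
    have P0: "P \<ge> 0" unfolding P_def by (rule integral_nonneg_AE) (simp add: fPnn)
    have s0: "s \<ge> 0" unfolding s_def by (rule integral_nonneg_AE) (simp add: fSnn)
    have PG: "P \<le> (LINT u|lborel. \<bar>G u\<bar>)"
      unfolding P_def by (rule Bochner_Integration.integral_mono[OF intP Gabs]) (simp add: fP_def)
    have sP: "s > 0" if Ppos: "P > 0"
    proof (rule ccontr)
      assume "\<not> s > 0"
      then have "s = 0" using s0 by simp
      then have "AE u in lborel. fS u = 0"
        using integral_nonneg_eq_0_iff_AE[OF intS] fSnn unfolding s_def by simp
      then have "AE u in lborel. fP u = 0"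
      proof (rule AE_mp, intro AE_I2 impI)
        fix u assume "fS u = 0"
        then show "fP u = 0" unfolding fS_def fP_def using ratio[of u] by (auto split: if_splits)
      qed
      then have "P = 0" unfolding P_def by (rule integral_eq_zero_AE)
      then show False using Ppos by simp
    qed
    define \<omega> where "\<omega> = (if P = 0 then 1 else a * s / P)"
    have \<omega>p: "\<omega> > 0"
      unfolding \<omega>_def using sP P0 ap by auto
    have \<omega>P: "\<omega> * P \<le> a * s"
      unfolding \<omega>_def using P0 s0 ap by auto
    obtain \<delta> where \<delta>p: "\<delta> > 0" and \<delta>: "\<And>t s'. \<bar>t\<bar> \<le> T \<Longrightarrow> \<bar>s'\<bar> \<le> T \<Longrightarrow> \<bar>t - s'\<bar> < \<delta> \<Longrightarrow>
           op_norm d (op_diff (heis d H0 t Op) (heis d H0 s' Op)) < \<omega>"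
      using heis_unif[OF \<omega>p, of T d H0 Op] by blast
    obtain n where n: "inverse (real (Suc n)) < \<delta>" using reals_Archimedean[OF \<delta>p] by blast
    define N where "N = Suc n"
    have Np: "N > 0" unfolding N_def by simp
    have invN: "1 / real N < \<delta>" using n unfolding N_def by (simp add: inverse_eq_divide)
    define \<tau>k where "\<tau>k = (\<lambda>k::int. if k \<ge> 0 then real_of_int k / real N else real_of_int (k + 1) / real N)"
    define Xp where "Xp = (\<lambda>k. SOME X'. supported_on d (bl l A) X' \<and>
        (\<bar>\<tau>k k\<bar> \<le> T \<longrightarrow> op_norm d (op_diff (heis d H0 (\<tau>k k) Op) X') \<le> a * \<bar>\<tau>k k\<bar> / T))"
    have Xp: "supported_on d (bl l A) (Xp k) \<and>
        (\<bar>\<tau>k k\<bar> \<le> T \<longrightarrow> op_norm d (op_diff (heis d H0 (\<tau>k k) Op) (Xp k)) \<le> a * \<bar>\<tau>k k\<bar> / T)" for k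
    proof -
      have exk: "\<exists>X'. supported_on d (bl l A) X' \<and>
        (\<bar>\<tau>k k\<bar> \<le> T \<longrightarrow> op_norm d (op_diff (heis d H0 (\<tau>k k) Op) X') \<le> a * \<bar>\<tau>k k\<bar> / T)"
      proof (cases "\<bar>\<tau>k k\<bar> \<le> T")
        case True
        then show ?thesis using LR'[OF True] by blast
      next
        case False
        then show ?thesis using supported_zero by blast
      qed
      show ?thesis using someI_ex[OF exk] unfolding Xp_def .
    qed
    define Sel where "Sel = (\<lambda>t. if \<bar>t\<bar> < T then Xp \<lfloor>real N * t\<rfloor> else (\<lambda>_ _. 0))"
    have supS: "supported_on d (bl l A) (Sel t)" for t
      unfolding Sel_def using Xp supported_zero[of d "bl l A"] by simp
    have fl: "(\<lambda>t. \<lfloor>real N * t\<rfloor>) \<in> measurable borel (count_space UNIV)" by measurable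
    have meas: "(\<lambda>t. Sel t \<sigma> \<tau>) \<in> borel_measurable borel" if "\<sigma> \<in> conf d" "\<tau> \<in> conf d" for \<sigma> \<tau>
    proof -
      have [measurable]: "(\<lambda>t. Xp \<lfloor>real N * t\<rfloor> \<sigma> \<tau>) \<in> borel_measurable borel"
        using measurable_compose_countable[OF _ fl, of "\<lambda>k t. Xp k \<sigma> \<tau>" borel] by simp
      have "(\<lambda>t. Sel t \<sigma> \<tau>) = (\<lambda>t. if \<bar>t\<bar> < T then Xp \<lfloor>real N * t\<rfloor> \<sigma> \<tau> else 0)"
        unfolding Sel_def by auto
      also have "\<dots> \<in> borel_measurable borel" by measurable
      finally show ?thesis .
    qed
    have bdd: "\<exists>M. \<forall>t. cmod (Sel t \<sigma> \<tau>) \<le> M" if "\<sigma> \<in> conf d" "\<tau> \<in> conf d" for \<sigma> \<tau>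
    proof (intro exI allI)
      fix t
      let ?R = "{-\<lceil>real N * T\<rceil>..\<lceil>real N * T\<rceil>}"
      show "cmod (Sel t \<sigma> \<tau>) \<le> (\<Sum>k\<in>?R. cmod (Xp k \<sigma> \<tau>))"
      proof (cases "\<bar>t\<bar> < T")
        case True
        then show ?thesis unfolding Sel_def
          using member_le_sum[of "\<lfloor>real N * t\<rfloor>" ?R "\<lambda>k. cmod (Xp k \<sigma> \<tau>)"] floor_range[OF True, of N]
          by simp
      next
        case False
        then show ?thesis unfolding Sel_def by (simp add: sum_nonneg)
      qed
    qed
    have err: "op_norm d (op_diff (heis d H0 t Op) (Sel t)) \<le> \<omega> + a * \<bar>t\<bar> / T" if tT: "\<bar>t\<bar> < T" for t
    proof -
      define k where "k = \<lfloor>real N * t\<rfloor>"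
      have r1: "\<bar>\<tau>k k\<bar> \<le> \<bar>t\<bar>" unfolding \<tau>k_def k_def by (rule floor_rep(1)[OF Np])
      have r2: "\<bar>t - \<tau>k k\<bar> \<le> 1 / real N" unfolding \<tau>k_def k_def by (rule floor_rep(2)[OF Np])
      have Sk: "Sel t = Xp k" unfolding Sel_def k_def using tT by simp
      have "op_norm d (op_diff (heis d H0 t Op) (Xp k))
          \<le> op_norm d (op_diff (heis d H0 t Op) (heis d H0 (\<tau>k k) Op)) + op_norm d (op_diff (heis d H0 (\<tau>k k) Op) (Xp k))"
        by (rule op_norm_triangle)
      also have "op_norm d (op_diff (heis d H0 t Op) (heis d H0 (\<tau>k k) Op)) < \<omega>"
        using \<delta>[of t "\<tau>k k"] tT r1 r2 invN by linarith
      also have "op_norm d (op_diff (heis d H0 (\<tau>k k) Op) (Xp k)) \<le> a * \<bar>\<tau>k k\<bar> / T"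
        using Xp[of k] r1 tT by simp
      also have "a * \<bar>\<tau>k k\<bar> / T \<le> a * \<bar>t\<bar> / T"
        using r1 a0 Tp by (intro divide_right_mono mult_left_mono) auto
      finally show ?thesis unfolding Sk by simp
    qed
    have emeas: "(\<lambda>t::real. \<omega> + a * \<bar>t\<bar> / T) \<in> borel_measurable borel" by measurable
    have ebdd: "\<bar>\<omega> + a * \<bar>t\<bar> / T\<bar> \<le> \<omega> + a" if "\<bar>t\<bar> < T" for t
    proof -
      have "a * \<bar>t\<bar> / T \<le> a" using that a0 Tp by (simp add: divide_le_eq mult_left_mono)
      moreover have "a * \<bar>t\<bar> / T \<ge> 0" using a0 Tp by simp
      ultimately show ?thesis using \<omega>p by simp
    qed
    have ex: "\<exists>W. supported_on d (bl l A) W \<and> op_norm d (op_diff (filtered d H0 \<gamma> G Op) W)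
           \<le> (LINT t|lborel. \<gamma> * \<bar>G (\<gamma> * t)\<bar> * (if \<bar>t\<bar> < T then (\<lambda>t. \<omega> + a * \<bar>t\<bar> / T) t else op_norm d Op))"
      by (rule construct[where Sel=Sel and e="\<lambda>t. \<omega> + a * \<bar>t\<bar> / T" and E="\<omega> + a"])
         (use dims H gamma_pos G_int supS meas bdd err emeas ebdd in \<open>auto simp: Sel_def\<close>)
    define h where "h = (\<lambda>u. if \<bar>u\<bar> < \<gamma> * T then \<omega> + a * \<bar>u\<bar> / (\<gamma> * T) else c0)"
    have "(LINT t|lborel. \<gamma> * \<bar>G (\<gamma> * t)\<bar> * (if \<bar>t\<bar> < T then (\<lambda>t. \<omega> + a * \<bar>t\<bar> / T) t else op_norm d Op))
        = (LINT t|lborel. \<gamma> * \<bar>G (\<gamma> * t)\<bar> * h (\<gamma> * t))"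
      using gamma_pos unfolding h_def
      by (intro Bochner_Integration.integral_cong refl) (simp add: c0_def abs_mult)
    also have "\<dots> = (LINT u|lborel. \<bar>G u\<bar> * h u)"
      by (rule lint_subst[OF gamma_pos])
    also have "\<dots> = (LINT u|lborel. fC u + a * fP u - a * fS u + \<omega> * fP u)"
    proof (intro Bochner_Integration.integral_cong refl)
      fix u
      show "\<bar>G u\<bar> * h u = fC u + a * fP u - a * fS u + \<omega> * fP u"
        unfolding h_def fC_def fP_def fS_def using gTp by (auto simp: field_simps)
    qed
    also have "\<dots> = c0 * tail + a * P - a * s + \<omega> * P"
      using intC intP intS c0tail unfolding P_def s_def fC_def[symmetric] by simp
    also have "\<dots> \<le> c0 * tail + a * (LINT u|lborel. \<bar>G u\<bar>)"
      using \<omega>P PG a0 by (smt (verit) mult_left_mono)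
    also have "\<dots> = ((LINT u:{u. \<bar>u\<bar> \<ge> l * \<gamma> / vLR}|lborel. \<bar>G u\<bar>)
                 + g l * real (card A) * (LINT u|lborel. \<bar>G u\<bar>)) * op_norm d Op"
      unfolding K ..
    finally show ?thesis using ex by auto
  qed
qed

end
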